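(* Let $(H,L_H)$ be a right-resolving, regular and follower-separated labeled graph. Then $(H,L_H)$ is predecessor-separated.
   Context: A labeled graph $(H,L_H)$: finite directed graph (vertices $V_H$, edges $E_H$, source/terminal maps $s_H,t_H$) without sinks or sources, labeling $L_H:E_H\to A$, edge shift $X_H$; $L_H$ acts coordinatewise; it presents $Y=L_H(X_H)$. Right-resolving: distinct edges with the same source have distinct labels. $f_H(v)=\{L_H(x): x$ a right-infinite path starting at $v\}$; $p_H(v)=\{L_H(z): z=\cdots z_{-2}z_{-1}$ a left-infinite path whose last edge ends at $v\}$. For $y\in Y$, $F(y)=\{w\in Y[0,\infty): y_{(-\infty,-1]}w\in Y\}$ with $Y[0,\infty)=\{y_{[0,\infty)}:y\in Y\}$. A vertex $v$ is regular if there is $z\in X_H$ whose edge $z_{-1}$ ends at $v$ with $f_H(v)=F(L_H(z))$; the graph is regular if all vertices are. Follower-separated: $f_H(v)=f_H(w)\Rightarrow v=w$. Predecessor-separated: $p_H(v)=p_H(w)\Rightarrow v=w$. *)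

theory Defs
  imports Main
begin

definition labeled_graph ::
  "'v set \<Rightarrow> 'e set \<Rightarrow> ('e \<Rightarrow> 'v) \<Rightarrow> ('e \<Rightarrow> 'v) \<Rightarrow> ('e \<Rightarrow> 'a) \<Rightarrow> bool" where
  "labeled_graph V E s t L \<longleftrightarrow>
     finite V \<and> finite E \<and>
     (\<forall>e\<in>E. s e \<in> V \<and> t e \<in> V) \<and>
     (\<forall>v\<in>V. \<exists>e\<in>E. s e = v) \<and>
     (\<forall>v\<in>V. \<exists>e\<in>E. t e = v)"

definition edge_shift :: "'e set \<Rightarrow> ('e \<Rightarrow> 'v) \<Rightarrow> ('e \<Rightarrow> 'v) \<Rightarrow> (int \<Rightarrow> 'e) set" where
  "edge_shift E s t = {x. (\<forall>i. x i \<in> E) \<and> (\<forall>i. t (x i) = s (x (i + 1)))}"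

definition presented_shift ::
  "'e set \<Rightarrow> ('e \<Rightarrow> 'v) \<Rightarrow> ('e \<Rightarrow> 'v) \<Rightarrow> ('e \<Rightarrow> 'a) \<Rightarrow> (int \<Rightarrow> 'a) set" where
  "presented_shift E s t L = (\<lambda>x. L \<circ> x) ` edge_shift E s t"

definition right_resolving ::
  "'e set \<Rightarrow> ('e \<Rightarrow> 'v) \<Rightarrow> ('e \<Rightarrow> 'a) \<Rightarrow> bool" where
  "right_resolving E s L \<longleftrightarrow>
     (\<forall>e1\<in>E. \<forall>e2\<in>E. e1 \<noteq> e2 \<and> s e1 = s e2 \<longrightarrow> L e1 \<noteq> L e2)"

definition follower_set ::
  "'e set \<Rightarrow> ('e \<Rightarrow> 'v) \<Rightarrow> ('e \<Rightarrow> 'v) \<Rightarrow> ('e \<Rightarrow> 'a) \<Rightarrow> 'v \<Rightarrow> (nat \<Rightarrow> 'a) set" where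
  "follower_set E s t L v =
     {L \<circ> x | x. (\<forall>n. x n \<in> E) \<and> (\<forall>n. t (x n) = s (x (Suc n))) \<and> s (x 0) = v}"

text \<open>A left-infinite path \<open>\<cdots> z_{-2} z_{-1}\<close> is encoded as \<open>z :: nat \<Rightarrow> 'e\<close>
  with \<open>z n\<close> standing for \<open>z_{-(n+1)}\<close>; its label is encoded in the same way.\<close>
definition predecessor_set ::
  "'e set \<Rightarrow> ('e \<Rightarrow> 'v) \<Rightarrow> ('e \<Rightarrow> 'v) \<Rightarrow> ('e \<Rightarrow> 'a) \<Rightarrow> 'v \<Rightarrow> (nat \<Rightarrow> 'a) set" where
  "predecessor_set E s t L v =
     {L \<circ> z | z. (\<forall>n. z n \<in> E) \<and> (\<forall>n. t (z (Suc n)) = s (z n)) \<and> t (z 0) = v}"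

definition right_rays :: "(int \<Rightarrow> 'a) set \<Rightarrow> (nat \<Rightarrow> 'a) set" where
  "right_rays Y = (\<lambda>y. \<lambda>n. y (int n)) ` Y"

definition future_set :: "(int \<Rightarrow> 'a) set \<Rightarrow> (int \<Rightarrow> 'a) \<Rightarrow> (nat \<Rightarrow> 'a) set" where
  "future_set Y y = {w \<in> right_rays Y. (\<lambda>i. if i < 0 then y i else w (nat i)) \<in> Y}"

definition regular_vertex ::
  "'e set \<Rightarrow> ('e \<Rightarrow> 'v) \<Rightarrow> ('e \<Rightarrow> 'v) \<Rightarrow> ('e \<Rightarrow> 'a) \<Rightarrow> 'v \<Rightarrow> bool" where
  "regular_vertex E s t L v \<longleftrightarrow>
     (\<exists>z\<in>edge_shift E s t. t (z (-1)) = v \<and>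
        follower_set E s t L v = future_set (presented_shift E s t L) (L \<circ> z))"

definition regular_graph ::
  "'v set \<Rightarrow> 'e set \<Rightarrow> ('e \<Rightarrow> 'v) \<Rightarrow> ('e \<Rightarrow> 'v) \<Rightarrow> ('e \<Rightarrow> 'a) \<Rightarrow> bool" where
  "regular_graph V E s t L \<longleftrightarrow> (\<forall>v\<in>V. regular_vertex E s t L v)"

definition follower_separated ::
  "'v set \<Rightarrow> 'e set \<Rightarrow> ('e \<Rightarrow> 'v) \<Rightarrow> ('e \<Rightarrow> 'v) \<Rightarrow> ('e \<Rightarrow> 'a) \<Rightarrow> bool" where
  "follower_separated V E s t L \<longleftrightarrow>
     (\<forall>v\<in>V. \<forall>w\<in>V. follower_set E s t L v = follower_set E s t L w \<longrightarrow> v = w)"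

definition predecessor_separated ::
  "'v set \<Rightarrow> 'e set \<Rightarrow> ('e \<Rightarrow> 'v) \<Rightarrow> ('e \<Rightarrow> 'v) \<Rightarrow> ('e \<Rightarrow> 'a) \<Rightarrow> bool" where
  "predecessor_separated V E s t L \<longleftrightarrow>
     (\<forall>v\<in>V. \<forall>w\<in>V. predecessor_set E s t L v = predecessor_set E s t L w \<longrightarrow> v = w)"

end

theory Submission
  imports Defs
begin

lemma predA:
  assumes "z \<in> edge_shift E s t"
  shows "(\<lambda>n. L (z (- int n - 1))) \<in> predecessor_set E s t L (t (z (-1)))"
proof -
  have "\<forall>n. z (- int n - 1) \<in> E" using assms by (simp add: edge_shift_def)
  moreover have "\<forall>n. t (z (- int (Suc n) - 1)) = s (z (- int n - 1))"
  proof
    fix n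
    have "t (z (- int (Suc n) - 1)) = s (z ((- int (Suc n) - 1) + 1))"
      using assms by (simp add: edge_shift_def)
    also have "(- int (Suc n) - 1) + 1 = - int n - 1" by simp
    finally show "t (z (- int (Suc n) - 1)) = s (z (- int n - 1))" .
  qed
  ultimately show ?thesis unfolding predecessor_set_def
    by (rule_tac CollectI, rule_tac x="\<lambda>n. z (- int n - 1)" in exI) (auto simp: o_def)
qed

lemma futB:
  assumes a: "a \<in> predecessor_set E s t L w"
    and u: "u \<in> follower_set E s t L w"
    and y: "\<And>n. y (- int n - 1) = a n"
  shows "u \<in> future_set (presented_shift E s t L) y"
proof -
  obtain z where z: "a = L \<circ> z" "\<forall>n. z n \<in> E" "\<forall>n. t (z (Suc n)) = s (z n)" "t (z 0) = w"
    using a unfolding predecessor_set_def by blast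
  obtain x where x: "u = L \<circ> x" "\<forall>n. x n \<in> E" "\<forall>n. t (x n) = s (x (Suc n))" "s (x 0) = w"
    using u unfolding follower_set_def by blast
  define x' where "x' = (\<lambda>i::int. if i < 0 then z (nat (-i-1)) else x (nat i))"
  have es: "x' \<in> edge_shift E s t"
    unfolding edge_shift_def
  proof (intro CollectI conjI allI)
    fix i :: int
    show "x' i \<in> E" using z x by (simp add: x'_def)
    show "t (x' i) = s (x' (i + 1))"
    proof (cases "i < -1")
      case True
      have "nat (-i-1) = Suc (nat (-(i+1)-1))" using True by simp
      then show ?thesis using True z(3) unfolding x'_def by simp
    next
      case False
      show ?thesis
      proof (cases "i = -1")
        case True then show ?thesis using z x unfolding x'_def by simp
      next
        case False
        with \<open>\<not> i < -1\<close> have "i \<ge> 0" by simp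
        then have "nat (i+1) = Suc (nat i)" by simp
        then show ?thesis using \<open>i \<ge> 0\<close> x(3) unfolding x'_def by simp
      qed
    qed
  qed
  have lab: "L \<circ> x' = (\<lambda>i. if i < 0 then y i else u (nat i))"
  proof
    fix i :: int
    show "(L \<circ> x') i = (if i < 0 then y i else u (nat i))"
    proof (cases "i < 0")
      case True
      have "y (- int (nat (-i-1)) - 1) = a (nat (-i-1))" by (rule y)
      moreover have "- int (nat (-i-1)) - 1 = i" using True by simp
      ultimately show ?thesis using True z(1) unfolding x'_def by simp
    next
      case False then show ?thesis using x(1) unfolding x'_def by simp
    qed
  qed
  have mem: "L \<circ> x' \<in> presented_shift E s t L"
    unfolding presented_shift_def using es by blast
  have "u = (\<lambda>n. (L \<circ> x') (int n))" using lab by auto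
  then have "u \<in> right_rays (presented_shift E s t L)"
    unfolding right_rays_def using mem by blast
  then show ?thesis unfolding future_set_def using mem lab by simp
qed

lemma sub:
  assumes reg: "regular_vertex E s t L v"
    and eq: "predecessor_set E s t L v = predecessor_set E s t L w"
  shows "follower_set E s t L w \<subseteq> follower_set E s t L v"
proof -
  obtain z where z: "z \<in> edge_shift E s t" "t (z (-1)) = v"
    "follower_set E s t L v = future_set (presented_shift E s t L) (L \<circ> z)"
    using reg unfolding regular_vertex_def by blast
  have "(\<lambda>n. L (z (- int n - 1))) \<in> predecessor_set E s t L w"
    using predA[OF z(1), of L] z(2) eq by simp
  then show ?thesis using futB[of _ E s t L w _ "L \<circ> z"] z(3) by auto
qed

theorem lemma3p4:
  fixes V :: "'v set" and E :: "'e set" and s t :: "'e \<Rightarrow> 'v" and L :: "'e \<Rightarrow> 'a"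
  assumes "labeled_graph V E s t L"
    and "right_resolving E s L"
    and "regular_graph V E s t L"
    and "follower_separated V E s t L"
  shows "predecessor_separated V E s t L"
  unfolding predecessor_separated_def
proof (intro ballI impI)
  fix v w assume vw: "v \<in> V" "w \<in> V"
    and eq: "predecessor_set E s t L v = predecessor_set E s t L w"
  have "follower_set E s t L w \<subseteq> follower_set E s t L v"
    using sub[OF _ eq] assms(3) vw unfolding regular_graph_def by blast
  moreover have "follower_set E s t L v \<subseteq> follower_set E s t L w"
    using sub[OF _ eq[symmetric]] assms(3) vw unfolding regular_graph_def by blast
  ultimately show "v = w" using assms(4) vw unfolding follower_separated_def by blast
qed

end
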